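(* Let $p\in\mathbb{Z}[x_1,x_2,x_3,x_4,x_5,x_6]$. If $p(\sin\alpha_1,\sin\alpha_2,\sin\alpha_3,\cos\alpha_1,\cos\alpha_2,\cos\alpha_3)=0$ holds for the interior angles $\alpha_1,\alpha_2,\alpha_3$ of some generic Euclidean triangle, then it holds for the interior angles of every Euclidean triangle.
   Context: A Euclidean triangle with edge lengths $\ell_1,\ell_2,\ell_3$ is generic if for some real $k>0$ the numbers $k\ell_1,k\ell_2,k\ell_3$ are algebraically independent over $\mathbb{Q}$ (no nonzero integer polynomial in three variables vanishes on them). The angle $\alpha_i$ is the interior angle opposite the edge of length $\ell_i$. *)

theory Defs
  imports Complex_Main
begin

text \<open>Integer polynomials in several variables are represented by their coefficient
  function on exponent tuples, required to have finite support.\<close>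

type_synonym exp3 = "nat \<times> nat \<times> nat"
type_synonym exp6 = "nat \<times> nat \<times> nat \<times> nat \<times> nat \<times> nat"

definition int_poly3 :: "(exp3 \<Rightarrow> int) \<Rightarrow> bool" where
  "int_poly3 c \<longleftrightarrow> finite {m. c m \<noteq> 0}"

definition int_poly6 :: "(exp6 \<Rightarrow> int) \<Rightarrow> bool" where
  "int_poly6 c \<longleftrightarrow> finite {m. c m \<noteq> 0}"

definition eval3 :: "(exp3 \<Rightarrow> int) \<Rightarrow> real \<Rightarrow> real \<Rightarrow> real \<Rightarrow> real" where
  "eval3 c x1 x2 x3 =
     (\<Sum>(a1, a2, a3)\<in>{m. c m \<noteq> 0}. of_int (c (a1, a2, a3)) * x1 ^ a1 * x2 ^ a2 * x3 ^ a3)"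

definition eval6 :: "(exp6 \<Rightarrow> int) \<Rightarrow> real \<Rightarrow> real \<Rightarrow> real \<Rightarrow> real \<Rightarrow> real \<Rightarrow> real \<Rightarrow> real" where
  "eval6 c x1 x2 x3 x4 x5 x6 =
     (\<Sum>(a1, a2, a3, a4, a5, a6)\<in>{m. c m \<noteq> 0}.
        of_int (c (a1, a2, a3, a4, a5, a6)) * x1 ^ a1 * x2 ^ a2 * x3 ^ a3 * x4 ^ a4 * x5 ^ a5 * x6 ^ a6)"

definition alg_indep3 :: "real \<Rightarrow> real \<Rightarrow> real \<Rightarrow> bool" where
  "alg_indep3 x1 x2 x3 \<longleftrightarrow>
     (\<forall>c. int_poly3 c \<and> c \<noteq> (\<lambda>_. 0) \<longrightarrow> eval3 c x1 x2 x3 \<noteq> 0)"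

definition is_triangle :: "real \<Rightarrow> real \<Rightarrow> real \<Rightarrow> bool" where
  "is_triangle l1 l2 l3 \<longleftrightarrow> l1 > 0 \<and> l2 > 0 \<and> l3 > 0 \<and>
     l1 < l2 + l3 \<and> l2 < l3 + l1 \<and> l3 < l1 + l2"

definition generic_triangle :: "real \<Rightarrow> real \<Rightarrow> real \<Rightarrow> bool" where
  "generic_triangle l1 l2 l3 \<longleftrightarrow> is_triangle l1 l2 l3 \<and>
     (\<exists>k>0. alg_indep3 (k * l1) (k * l2) (k * l3))"

text \<open>Interior angle opposite the edge of length a, the other edges being b and c
  (law of cosines).\<close>
definition opp_angle :: "real \<Rightarrow> real \<Rightarrow> real \<Rightarrow> real" where
  "opp_angle a b c = arccos ((b\<^sup>2 + c\<^sup>2 - a\<^sup>2) / (2 * b * c))"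

definition poly_at_angles :: "(exp6 \<Rightarrow> int) \<Rightarrow> real \<Rightarrow> real \<Rightarrow> real \<Rightarrow> real" where
  "poly_at_angles p l1 l2 l3 =
     (let a1 = opp_angle l1 l2 l3; a2 = opp_angle l2 l3 l1; a3 = opp_angle l3 l1 l2
      in eval6 p (sin a1) (sin a2) (sin a3) (cos a1) (cos a2) (cos a3))"

end

theory Submission imports Defs begin


inductive ipoly :: "(real \<Rightarrow> real \<Rightarrow> real \<Rightarrow> real) \<Rightarrow> bool" where
  ip_const: "ipoly (\<lambda>x y z. of_int n)"
| ip_X: "ipoly (\<lambda>x y z. x)"
| ip_Y: "ipoly (\<lambda>x y z. y)"
| ip_Z: "ipoly (\<lambda>x y z. z)"
| ip_add: "ipoly f \<Longrightarrow> ipoly g \<Longrightarrow> ipoly (\<lambda>x y z. f x y z + g x y z)"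
| ip_mult: "ipoly f \<Longrightarrow> ipoly g \<Longrightarrow> ipoly (\<lambda>x y z. f x y z * g x y z)"

definition mon :: "exp3 \<Rightarrow> real \<Rightarrow> real \<Rightarrow> real \<Rightarrow> real" where
  "mon m x y z = (case m of (a1,a2,a3) \<Rightarrow> x ^ a1 * y ^ a2 * z ^ a3)"

definition addm :: "exp3 \<Rightarrow> exp3 \<Rightarrow> exp3" where
  "addm m n = (case m of (a1,a2,a3) \<Rightarrow> case n of (b1,b2,b3) \<Rightarrow> (a1+b1,a2+b2,a3+b3))"

lemma mon_addm: "mon (addm m n) x y z = mon m x y z * mon n x y z"
  by (cases m; cases n) (simp add: mon_def addm_def power_add)

lemma eval3_alt: "eval3 c x y z = (\<Sum>m\<in>{m. c m \<noteq> 0}. of_int (c m) * mon m x y z)"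
  unfolding eval3_def mon_def by (rule sum.cong) (auto simp: mult.assoc)

lemma eval3_superset:
  assumes "finite S" "{m. c m \<noteq> 0} \<subseteq> S"
  shows "eval3 c x y z = (\<Sum>m\<in>S. of_int (c m) * mon m x y z)"
  unfolding eval3_alt using assms by (intro sum.mono_neutral_left) auto

lemma ipoly_coeffs:
  assumes "ipoly f"
  shows "\<exists>c. int_poly3 c \<and> (\<forall>x y z. f x y z = eval3 c x y z)"
  using assms
proof induction
  case (ip_const n)
  define c where "c = (\<lambda>m::exp3. if m = (0,0,0) then n else 0)"
  have "{m. c m \<noteq> 0} \<subseteq> {(0,0,0)}" by (auto simp: c_def split: if_splits)
  hence "eval3 c x y z = (\<Sum>m\<in>{(0,0,0)}. of_int (c m) * mon m x y z)" for x y z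
    by (intro eval3_superset) auto
  moreover have "int_poly3 c" unfolding int_poly3_def
    using \<open>{m. c m \<noteq> 0} \<subseteq> {(0,0,0)}\<close> finite_subset by blast
  ultimately show ?case by (intro exI[of _ c]) (auto simp: c_def mon_def)
next
  case ip_X
  define c where "c = (\<lambda>m::exp3. if m = (1,0,0) then 1 else 0::int)"
  have "{m. c m \<noteq> 0} \<subseteq> {(1,0,0)}" by (auto simp: c_def split: if_splits)
  hence "eval3 c x y z = (\<Sum>m\<in>{(1,0,0)}. of_int (c m) * mon m x y z)" for x y z
    by (intro eval3_superset) auto
  moreover have "int_poly3 c" unfolding int_poly3_def
    using \<open>{m. c m \<noteq> 0} \<subseteq> {(1,0,0)}\<close> finite_subset by blast
  ultimately show ?case by (intro exI[of _ c]) (auto simp: c_def mon_def)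
next
  case ip_Y
  define c where "c = (\<lambda>m::exp3. if m = (0,1,0) then 1 else 0::int)"
  have "{m. c m \<noteq> 0} \<subseteq> {(0,1,0)}" by (auto simp: c_def split: if_splits)
  hence "eval3 c x y z = (\<Sum>m\<in>{(0,1,0)}. of_int (c m) * mon m x y z)" for x y z
    by (intro eval3_superset) auto
  moreover have "int_poly3 c" unfolding int_poly3_def
    using \<open>{m. c m \<noteq> 0} \<subseteq> {(0,1,0)}\<close> finite_subset by blast
  ultimately show ?case by (intro exI[of _ c]) (auto simp: c_def mon_def)
next
  case ip_Z
  define c where "c = (\<lambda>m::exp3. if m = (0,0,1) then 1 else 0::int)"
  have "{m. c m \<noteq> 0} \<subseteq> {(0,0,1)}" by (auto simp: c_def split: if_splits)
  hence "eval3 c x y z = (\<Sum>m\<in>{(0,0,1)}. of_int (c m) * mon m x y z)" for x y z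
    by (intro eval3_superset) auto
  moreover have "int_poly3 c" unfolding int_poly3_def
    using \<open>{m. c m \<noteq> 0} \<subseteq> {(0,0,1)}\<close> finite_subset by blast
  ultimately show ?case by (intro exI[of _ c]) (auto simp: c_def mon_def)
next
  case (ip_add f g)
  then obtain c1 c2 where c1: "int_poly3 c1" "\<forall>x y z. f x y z = eval3 c1 x y z"
    and c2: "int_poly3 c2" "\<forall>x y z. g x y z = eval3 c2 x y z" by blast
  define S where "S = {m. c1 m \<noteq> 0} \<union> {m. c2 m \<noteq> 0}"
  have fS: "finite S" using c1 c2 by (simp add: S_def int_poly3_def)
  define c where "c = (\<lambda>m. c1 m + c2 m)"
  have sub: "{m. c m \<noteq> 0} \<subseteq> S" by (auto simp: c_def S_def)
  have "int_poly3 c" unfolding int_poly3_def using sub fS finite_subset by blast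
  moreover have "f x y z + g x y z = eval3 c x y z" for x y z
  proof -
    have "f x y z + g x y z = (\<Sum>m\<in>S. of_int (c1 m) * mon m x y z) + (\<Sum>m\<in>S. of_int (c2 m) * mon m x y z)"
      using c1 c2 fS by (simp add: eval3_superset S_def)
    also have "\<dots> = (\<Sum>m\<in>S. of_int (c m) * mon m x y z)"
      by (simp add: c_def sum.distrib[symmetric] distrib_right)
    also have "\<dots> = eval3 c x y z" using eval3_superset[OF fS sub] by simp
    finally show ?thesis .
  qed
  ultimately show ?case by blast
next
  case (ip_mult f g)
  then obtain c1 c2 where c1: "int_poly3 c1" "\<forall>x y z. f x y z = eval3 c1 x y z"
    and c2: "int_poly3 c2" "\<forall>x y z. g x y z = eval3 c2 x y z" by blast
  define S1 where "S1 = {m. c1 m \<noteq> 0}"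
  define S2 where "S2 = {m. c2 m \<noteq> 0}"
  have f1: "finite S1" and f2: "finite S2" using c1 c2 by (auto simp: S1_def S2_def int_poly3_def)
  define P where "P = S1 \<times> S2"
  have fP: "finite P" using f1 f2 by (simp add: P_def)
  define S where "S = (\<lambda>(a,b). addm a b) ` P"
  have fS: "finite S" using fP by (simp add: S_def)
  define c where "c = (\<lambda>m. \<Sum>q\<in>{q\<in>P. (\<lambda>(a,b). addm a b) q = m}. c1 (fst q) * c2 (snd q))"
  have sub: "{m. c m \<noteq> 0} \<subseteq> S"
  proof
    fix m assume "m \<in> {m. c m \<noteq> 0}"
    have "{q\<in>P. (\<lambda>(a,b). addm a b) q = m} \<noteq> {}" 
    proof
      assume E: "{q\<in>P. (\<lambda>(a,b). addm a b) q = m} = {}"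
      have "c m = 0" unfolding c_def E by simp
      with \<open>m \<in> {m. c m \<noteq> 0}\<close> show False by simp
    qed
    then obtain q where "q \<in> P" "(\<lambda>(a,b). addm a b) q = m" by blast
    thus "m \<in> S" unfolding S_def by blast
  qed
  have "int_poly3 c" unfolding int_poly3_def using sub fS finite_subset by blast
  moreover have "f x y z * g x y z = eval3 c x y z" for x y z
  proof -
    have "f x y z * g x y z = (\<Sum>a\<in>S1. of_int (c1 a) * mon a x y z) * (\<Sum>b\<in>S2. of_int (c2 b) * mon b x y z)"
      using c1 c2 by (simp add: eval3_alt S1_def S2_def)
    also have "\<dots> = (\<Sum>q\<in>P. of_int (c1 (fst q) * c2 (snd q)) * mon ((\<lambda>(a,b). addm a b) q) x y z)"
      unfolding P_def sum_product sum.cartesian_product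
      by (rule sum.cong) (auto simp: mon_addm)
    also have "\<dots> = (\<Sum>m\<in>S. \<Sum>q\<in>{q\<in>P. (\<lambda>(a,b). addm a b) q = m}. of_int (c1 (fst q) * c2 (snd q)) * mon ((\<lambda>(a,b). addm a b) q) x y z)"
      unfolding S_def by (rule sum.image_gen[OF fP])
    also have "\<dots> = (\<Sum>m\<in>S. of_int (c m) * mon m x y z)"
      unfolding c_def of_int_sum sum_distrib_right by (rule sum.cong) auto
    also have "\<dots> = eval3 c x y z" using eval3_superset[OF fS sub] by simp
    finally show ?thesis .
  qed
  ultimately show ?case by blast
qed



lemma ipoly_zero_fun: "ipoly (\<lambda>x y z. 0)"
  using ip_const[of 0] by simp

lemma ipoly_one_fun: "ipoly (\<lambda>x y z. 1)"
  using ip_const[of 1] by simp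

lemma ipoly_sum:
  assumes "finite S" "\<And>i. i \<in> S \<Longrightarrow> ipoly (f i)"
  shows "ipoly (\<lambda>x y z. \<Sum>i\<in>S. f i x y z)"
  using assms by (induction S rule: finite_induct) (auto intro: ipoly_zero_fun ip_add)

lemma ipoly_power: "ipoly f \<Longrightarrow> ipoly (\<lambda>x y z. f x y z ^ n)"
  by (induction n) (auto intro: ipoly_one_fun ip_mult)

lemma ipoly_shift: "ipoly f \<Longrightarrow> ipoly (\<lambda>x y z. f (x + of_int N) y z)"
  by (induction rule: ipoly.induct) (auto intro: ipoly.intros)

lemma ipoly_zero:
  assumes ai: "alg_indep3 a b c" and f: "ipoly f" and z: "f a b c = 0"
  shows "f x y z = 0"
proof -
  obtain cf where cf: "int_poly3 cf" "\<forall>x y z. f x y z = eval3 cf x y z"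
    using ipoly_coeffs[OF f] by blast
  have "cf = (\<lambda>_. 0)" using ai cf z unfolding alg_indep3_def by auto
  thus ?thesis using cf by (simp add: eval3_def)
qed

definition Qf :: "real \<Rightarrow> real \<Rightarrow> real \<Rightarrow> real" where
  "Qf x y z = (x+y+z)*(-x+y+z)*(x-y+z)*(x+y-z)"

lemma ipoly_neg: "ipoly f \<Longrightarrow> ipoly (\<lambda>x y z. - f x y z)"
  using ip_mult[OF ip_const[of "-1"]] by simp

lemma ipoly_Qf: "ipoly Qf"
proof -
  have "ipoly (\<lambda>x y z. (x+y+z)*((-x)+y+z)*(x+(-y)+z)*(x+y+(-z)))"
    by (intro ip_mult ip_add ip_X ip_Y ip_Z ipoly_neg)
  moreover have "(\<lambda>x y z. (x+y+z)*((-x)+y+z)*(x+(-y)+z)*(x+y+(-z))) = Qf"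
    by (auto simp: Qf_def fun_eq_iff)
  ultimately show ?thesis by simp
qed

definition Rf :: "(real \<Rightarrow> real \<Rightarrow> real \<Rightarrow> real) \<Rightarrow> bool" where
  "Rf g \<longleftrightarrow> (\<exists>P1 P2. ipoly P1 \<and> ipoly P2 \<and>
     (\<forall>x y z. 0 \<le> Qf x y z \<longrightarrow> g x y z = P1 x y z + sqrt (Qf x y z) * P2 x y z))"

lemma Rf_ipoly: "ipoly f \<Longrightarrow> Rf f"
  unfolding Rf_def by (intro exI[of _ f] exI[of _ "\<lambda>x y z. 0"]) (auto intro: ipoly_zero_fun)

lemma Rf_sqrt: "Rf (\<lambda>x y z. sqrt (Qf x y z))"
  unfolding Rf_def by (intro exI[of _ "\<lambda>x y z. 0"] exI[of _ "\<lambda>x y z. 1"]) (auto intro: ipoly_zero_fun ipoly_one_fun)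

lemma Rf_add: "Rf f \<Longrightarrow> Rf g \<Longrightarrow> Rf (\<lambda>x y z. f x y z + g x y z)"
  unfolding Rf_def
proof (elim exE conjE)
  fix P1 P2 R1 R2
  assume "ipoly P1" "ipoly P2" "ipoly R1" "ipoly R2"
    and f: "\<forall>x y z. 0 \<le> Qf x y z \<longrightarrow> f x y z = P1 x y z + sqrt (Qf x y z) * P2 x y z"
    and g: "\<forall>x y z. 0 \<le> Qf x y z \<longrightarrow> g x y z = R1 x y z + sqrt (Qf x y z) * R2 x y z"
  show "\<exists>P1 P2. ipoly P1 \<and> ipoly P2 \<and> (\<forall>x y z. 0 \<le> Qf x y z \<longrightarrow>
      f x y z + g x y z = P1 x y z + sqrt (Qf x y z) * P2 x y z)"
  proof (intro exI conjI allI impI)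
    fix x y z assume q: "0 \<le> Qf x y z"
    show "f x y z + g x y z = (P1 x y z + R1 x y z) + sqrt (Qf x y z) * (P2 x y z + R2 x y z)"
      using f g q by (simp add: algebra_simps)
  qed (intro ip_add; fact)+
qed

lemma Rf_mult: "Rf f \<Longrightarrow> Rf g \<Longrightarrow> Rf (\<lambda>x y z. f x y z * g x y z)"
  unfolding Rf_def
proof (elim exE conjE)
  fix P1 P2 R1 R2
  assume "ipoly P1" "ipoly P2" "ipoly R1" "ipoly R2"
    and f: "\<forall>x y z. 0 \<le> Qf x y z \<longrightarrow> f x y z = P1 x y z + sqrt (Qf x y z) * P2 x y z"
    and g: "\<forall>x y z. 0 \<le> Qf x y z \<longrightarrow> g x y z = R1 x y z + sqrt (Qf x y z) * R2 x y z"
  have i1: "ipoly (\<lambda>x y z. P1 x y z * R1 x y z + Qf x y z * (P2 x y z * R2 x y z))"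
    by (intro ip_add ip_mult ipoly_Qf) fact+
  have i2: "ipoly (\<lambda>x y z. P1 x y z * R2 x y z + P2 x y z * R1 x y z)"
    by (intro ip_add ip_mult) fact+
  show "\<exists>P1 P2. ipoly P1 \<and> ipoly P2 \<and> (\<forall>x y z. 0 \<le> Qf x y z \<longrightarrow>
      f x y z * g x y z = P1 x y z + sqrt (Qf x y z) * P2 x y z)"
  proof (intro exI conjI allI impI)
    fix x y z assume q: "0 \<le> Qf x y z"
    have s: "sqrt (Qf x y z) * sqrt (Qf x y z) = Qf x y z" using q by simp
    show "f x y z * g x y z = (P1 x y z * R1 x y z + Qf x y z * (P2 x y z * R2 x y z))
       + sqrt (Qf x y z) * (P1 x y z * R2 x y z + P2 x y z * R1 x y z)"
      using f g q s by (simp add: algebra_simps)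
  qed (fact i1, fact i2)
qed

lemma Rf_sum:
  assumes "finite S" "\<And>i. i \<in> S \<Longrightarrow> Rf (f i)"
  shows "Rf (\<lambda>x y z. \<Sum>i\<in>S. f i x y z)"
  using assms by (induction S rule: finite_induct) (auto intro: Rf_ipoly ipoly_zero_fun Rf_add)

lemma Rf_power: "Rf f \<Longrightarrow> Rf (\<lambda>x y z. f x y z ^ n)"
  by (induction n) (auto intro: Rf_ipoly ipoly_one_fun Rf_mult)



lemma ipoly_diff: "ipoly f \<Longrightarrow> ipoly g \<Longrightarrow> ipoly (\<lambda>x y z. f x y z - g x y z)"
  using ip_add[OF _ ipoly_neg] by simp

lemma ipoly_numeral: "ipoly (\<lambda>x y z. numeral n)"
  using ip_const[of "numeral n"] by simp

lemma Qf_triangle: "is_triangle a b c \<Longrightarrow> Qf a b c > 0"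
  unfolding is_triangle_def Qf_def by (intro mult_pos_pos) auto

lemma Qf_rot: "Qf b c a = Qf a b c"
  unfolding Qf_def by (simp add: algebra_simps)

lemma angle_cos_sin:
  assumes b: "b > 0" and c: "c > 0" and q: "Qf a b c > 0"
  shows "cos (opp_angle a b c) = (b\<^sup>2 + c\<^sup>2 - a\<^sup>2) / (2 * b * c)"
    and "sin (opp_angle a b c) = sqrt (Qf a b c) / (2 * b * c)"
proof -
  define u where "u = (b\<^sup>2 + c\<^sup>2 - a\<^sup>2) / (2 * b * c)"
  have id: "1 - u\<^sup>2 = Qf a b c / (2 * b * c)\<^sup>2"
    using b c unfolding u_def Qf_def by (simp add: field_simps power2_eq_square)
  have "u\<^sup>2 \<le> 1"
  proof -
    have "Qf a b c / (2 * b * c)\<^sup>2 \<ge> 0" using q by simp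
    thus ?thesis using id by linarith
  qed
  hence u1: "-1 \<le> u" "u \<le> 1" using abs_le_square_iff[of u 1] by auto
  show "cos (opp_angle a b c) = (b\<^sup>2 + c\<^sup>2 - a\<^sup>2) / (2 * b * c)"
    unfolding opp_angle_def u_def[symmetric] using u1 by (simp add: cos_arccos)
  have "sin (opp_angle a b c) = sqrt (1 - u\<^sup>2)"
    unfolding opp_angle_def u_def[symmetric] using u1 by (simp add: sin_arccos)
  also have "\<dots> = sqrt (Qf a b c) / (2 * b * c)"
    unfolding id using b c by (simp add: real_sqrt_divide)
  finally show "sin (opp_angle a b c) = sqrt (Qf a b c) / (2 * b * c)" .
qed

lemma opp_angle_scale:
  assumes "k > 0" "b > 0" "c > 0"
  shows "opp_angle (k*a) (k*b) (k*c) = opp_angle a b c"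
proof -
  have "((k*b)\<^sup>2 + (k*c)\<^sup>2 - (k*a)\<^sup>2) / (2 * (k*b) * (k*c)) = (b\<^sup>2 + c\<^sup>2 - a\<^sup>2) / (2 * b * c)"
    using assms by (simp add: field_simps power2_eq_square)
  thus ?thesis unfolding opp_angle_def by simp
qed

lemma term_alg:
  fixes L :: real
  shows "L^(a1+a2+a3+a4+a5+a6+r) * (q * s1^a1 * s2^a2 * s3^a3 * c1^a4 * c2^a5 * c3^a6)
     = q * (s1*L)^a1 * (s2*L)^a2 * (s3*L)^a3 * (c1*L)^a4 * (c2*L)^a5 * (c3*L)^a6 * L^r"
  by (simp add: power_add power_mult_distrib ac_simps)



theorem lemma2p3:
  fixes p :: "exp6 \<Rightarrow> int"
  assumes "int_poly6 p"
    and "generic_triangle l1 l2 l3"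
    and "poly_at_angles p l1 l2 l3 = 0"
    and "is_triangle m1 m2 m3"
  shows "poly_at_angles p m1 m2 m3 = 0"
proof -
  define S where "S = {m. p m \<noteq> 0}"
  have fS: "finite S" using assms(1) by (simp add: S_def int_poly6_def)
  define K where "K = (\<Sum>(a1,a2,a3,a4,a5,a6)\<in>S. a1+a2+a3+a4+a5+a6)"
  define Wf where "Wf = (\<lambda>x y z. \<Sum>(a1,a2,a3,a4,a5,a6)\<in>S. of_int (p (a1,a2,a3,a4,a5,a6))
     * (sqrt (Qf x y z) * x)^a1 * (sqrt (Qf x y z) * y)^a2 * (sqrt (Qf x y z) * z)^a3
     * (x*(y\<^sup>2+z\<^sup>2-x\<^sup>2))^a4 * (y*(z\<^sup>2+x\<^sup>2-y\<^sup>2))^a5 * (z*(x\<^sup>2+y\<^sup>2-z\<^sup>2))^a6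
     * (2*x*y*z)^(K - (a1+a2+a3+a4+a5+a6)))"
  have RW: "Rf Wf"
    unfolding Wf_def
  proof (rule Rf_sum[OF fS])
    fix i :: exp6
    obtain a1 a2 a3 a4 a5 a6 where i: "i = (a1,a2,a3,a4,a5,a6)" by (cases i) auto
    show "Rf (\<lambda>x y z. case i of (a1,a2,a3,a4,a5,a6) \<Rightarrow> of_int (p (a1,a2,a3,a4,a5,a6))
     * (sqrt (Qf x y z) * x)^a1 * (sqrt (Qf x y z) * y)^a2 * (sqrt (Qf x y z) * z)^a3
     * (x*(y\<^sup>2+z\<^sup>2-x\<^sup>2))^a4 * (y*(z\<^sup>2+x\<^sup>2-y\<^sup>2))^a5 * (z*(x\<^sup>2+y\<^sup>2-z\<^sup>2))^a6
     * (2*x*y*z)^(K - (a1+a2+a3+a4+a5+a6)))"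
      unfolding i prod.case
      by (intro Rf_mult Rf_power Rf_sqrt Rf_ipoly ip_mult ip_add ipoly_diff ipoly_power
          ip_X ip_Y ip_Z ipoly_numeral ip_const)
  qed
  have Weq: "Wf x y z = (2*x*y*z)^K * poly_at_angles p x y z" if t: "is_triangle x y z" for x y z
  proof -
    have pos: "x > 0" "y > 0" "z > 0" using t by (auto simp: is_triangle_def)
    have q: "Qf x y z > 0" using Qf_triangle[OF t] .
    have q2: "Qf y z x > 0" "Qf z x y > 0" using q Qf_rot by metis+
    define L where "L = 2*x*y*z"
    note cs1 = angle_cos_sin[OF pos(2) pos(3) q]
    note cs2 = angle_cos_sin[OF pos(3) pos(1) q2(1)]
    note cs3 = angle_cos_sin[OF pos(1) pos(2) q2(2)]
    have e1: "sin (opp_angle x y z) * L = sqrt (Qf x y z) * x"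
         "sin (opp_angle y z x) * L = sqrt (Qf x y z) * y"
         "sin (opp_angle z x y) * L = sqrt (Qf x y z) * z"
         "cos (opp_angle x y z) * L = x*(y\<^sup>2+z\<^sup>2-x\<^sup>2)"
         "cos (opp_angle y z x) * L = y*(z\<^sup>2+x\<^sup>2-y\<^sup>2)"
         "cos (opp_angle z x y) * L = z*(x\<^sup>2+y\<^sup>2-z\<^sup>2)"
      unfolding cs1 cs2 cs3 L_def using pos Qf_rot[of x y z] Qf_rot[of y z x]
      by (simp_all add: field_simps)
    have "L^K * poly_at_angles p x y z = (\<Sum>(a1,a2,a3,a4,a5,a6)\<in>S. L^K * (of_int (p (a1,a2,a3,a4,a5,a6))
        * sin (opp_angle x y z) ^ a1 * sin (opp_angle y z x) ^ a2 * sin (opp_angle z x y) ^ a3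
        * cos (opp_angle x y z) ^ a4 * cos (opp_angle y z x) ^ a5 * cos (opp_angle z x y) ^ a6))"
      unfolding poly_at_angles_def Let_def eval6_def S_def sum_distrib_left
      by (rule sum.cong) auto
    also have "\<dots> = Wf x y z"
      unfolding Wf_def L_def[symmetric]
    proof (rule sum.cong[OF refl])
      fix i assume iS: "i \<in> S"
      obtain a1 a2 a3 a4 a5 a6 where i: "i = (a1,a2,a3,a4,a5,a6)" by (cases i) auto
      have "a1+a2+a3+a4+a5+a6 \<le> K"
        unfolding K_def using member_le_sum[OF iS, of "\<lambda>(a1,a2,a3,a4,a5,a6). a1+a2+a3+a4+a5+a6"] fS
        by (simp add: i)
      hence Ke: "K = a1+a2+a3+a4+a5+a6 + (K - (a1+a2+a3+a4+a5+a6))" by simp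
      show "(case i of (a1,a2,a3,a4,a5,a6) \<Rightarrow> L^K * (of_int (p (a1,a2,a3,a4,a5,a6))
        * sin (opp_angle x y z) ^ a1 * sin (opp_angle y z x) ^ a2 * sin (opp_angle z x y) ^ a3
        * cos (opp_angle x y z) ^ a4 * cos (opp_angle y z x) ^ a5 * cos (opp_angle z x y) ^ a6))
        = (case i of (a1,a2,a3,a4,a5,a6) \<Rightarrow> of_int (p (a1,a2,a3,a4,a5,a6))
         * (sqrt (Qf x y z) * x)^a1 * (sqrt (Qf x y z) * y)^a2 * (sqrt (Qf x y z) * z)^a3
         * (x*(y\<^sup>2+z\<^sup>2-x\<^sup>2))^a4 * (y*(z\<^sup>2+x\<^sup>2-y\<^sup>2))^a5 * (z*(x\<^sup>2+y\<^sup>2-z\<^sup>2))^a6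
         * L^(K - (a1+a2+a3+a4+a5+a6)))"
        unfolding i prod.case e1[symmetric]
        by (subst Ke, rule term_alg)
    qed
    finally show ?thesis unfolding L_def by simp
  qed
  obtain k where k: "k > 0" "alg_indep3 (k*l1) (k*l2) (k*l3)" and tl: "is_triangle l1 l2 l3"
    using assms(2) by (auto simp: generic_triangle_def)
  define x1 where "x1 = k*l1"
  define x2 where "x2 = k*l2"
  define x3 where "x3 = k*l3"
  have ai: "alg_indep3 x1 x2 x3" using k by (simp add: x1_def x2_def x3_def)
  have lpos: "l1 > 0" "l2 > 0" "l3 > 0" using tl by (auto simp: is_triangle_def)
  have tx: "is_triangle x1 x2 x3" using tl k unfolding x1_def x2_def x3_def is_triangle_def
    by (auto simp: distrib_left[symmetric])
  have xpos: "x1 > 0" "x2 > 0" "x3 > 0" using tx by (auto simp: is_triangle_def)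
  have "poly_at_angles p x1 x2 x3 = poly_at_angles p l1 l2 l3"
    unfolding poly_at_angles_def x1_def x2_def x3_def
    using opp_angle_scale[OF k(1)] lpos by simp
  hence W0: "Wf x1 x2 x3 = 0" using Weq[OF tx] assms(3) by simp
  obtain P1 P2 where P: "ipoly P1" "ipoly P2"
    "\<And>x y z. 0 \<le> Qf x y z \<Longrightarrow> Wf x y z = P1 x y z + sqrt (Qf x y z) * P2 x y z"
    using RW unfolding Rf_def by blast
  have qx: "Qf x1 x2 x3 > 0" using Qf_triangle[OF tx] .
  have e0: "P1 x1 x2 x3 = - sqrt (Qf x1 x2 x3) * P2 x1 x2 x3" using P(3)[of x1 x2 x3] qx W0 by simp
  define G where "G = (\<lambda>x y z. P1 x y z ^ 2 - Qf x y z * P2 x y z ^ 2)"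
  have iG: "ipoly G" unfolding G_def by (intro ipoly_diff ipoly_power ip_mult ipoly_Qf P(1,2))
  have "G x1 x2 x3 = 0" unfolding G_def e0 using qx by (simp add: power_mult_distrib)
  hence G0: "\<And>x y z. G x y z = 0" using ipoly_zero[OF ai iG] by blast
  define N where "N = \<lceil>x2 + x3\<rceil> + 1"
  define y1 where "y1 = x1 + of_int N"
  have "of_int N > x2 + x3" unfolding N_def by linarith
  hence y1g: "y1 > x2 + x3" using xpos unfolding y1_def by linarith
  have qy: "Qf y1 x2 x3 < 0" unfolding Qf_def
  proof -
    have "(y1+x2+x3)*(-y1+x2+x3) < 0" using y1g xpos by (intro mult_pos_neg) auto
    moreover have "(y1-x2+x3)*(y1+x2-x3) > 0" using y1g xpos by (intro mult_pos_pos) auto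
    ultimately have "((y1+x2+x3)*(-y1+x2+x3))*((y1-x2+x3)*(y1+x2-x3)) < 0"
      by (rule mult_neg_pos)
    thus "(y1+x2+x3)*(-y1+x2+x3)*(y1-x2+x3)*(y1+x2-x3) < 0" by (simp add: mult.assoc)
  qed
  have "G y1 x2 x3 = 0" by (rule G0)
  hence g: "P1 y1 x2 x3 ^ 2 = Qf y1 x2 x3 * P2 y1 x2 x3 ^ 2" unfolding G_def by simp
  have "Qf y1 x2 x3 * P2 y1 x2 x3 ^ 2 \<le> 0" using qy by (intro mult_nonpos_nonneg) auto
  moreover have "P1 y1 x2 x3 ^ 2 \<ge> 0" by simp
  ultimately have "Qf y1 x2 x3 * P2 y1 x2 x3 ^ 2 = 0" using g by linarith
  hence z2: "P2 y1 x2 x3 = 0" using qy by simp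
  hence z1: "P1 y1 x2 x3 = 0" using g by simp
  have allz: "f a b c = 0" if "ipoly f" "f y1 x2 x3 = 0" for f a b c
  proof -
    have "ipoly (\<lambda>x y z. f (x + of_int N) y z)" using ipoly_shift[OF that(1)] .
    moreover have "f (x1 + of_int N) x2 x3 = 0" using that(2) by (simp add: y1_def)
    ultimately have "\<And>x y z. f (x + of_int N) y z = 0"
      using ipoly_zero[OF ai, of "\<lambda>x y z. f (x + of_int N) y z"] by blast
    from this[of "a - of_int N" b c] show ?thesis by simp
  qed
  have qm: "Qf m1 m2 m3 > 0" using Qf_triangle[OF assms(4)] .
  have "Wf m1 m2 m3 = 0" using P(3)[of m1 m2 m3] qm allz[OF P(1) z1] allz[OF P(2) z2] by simp
  hence "(2*m1*m2*m3)^K * poly_at_angles p m1 m2 m3 = 0" using Weq[OF assms(4)] by simp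
  moreover have "(2*m1*m2*m3)^K \<noteq> 0" using assms(4) by (auto simp: is_triangle_def)
  ultimately show ?thesis by (metis mult_eq_0_iff)
qed


end
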